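(* Let $0<q<1$ and $\lambda>0$, and let $X$ be a random variable with distribution function $F_X(t)=1-e_q(-\lambda t)$ for $t\ge 0$ (and $F_X(t)=0$ for $t<0$). Then $P_X$ is moment indeterminate in the classical sense, i.e. there exists a probability distribution on $[0,\infty)$ different from $P_X$ having the same moments $\int t^n\,dP$ for all $n\in\mathbb{N}_0$.
   Context: The $q$-exponential function is $e_q(t)=\prod_{j=0}^\infty\bigl(1-t(1-q)q^j\bigr)^{-1}$, so that $e_q(-\lambda t)=\prod_{j=0}^\infty\bigl(1+\lambda(1-q)q^jt\bigr)^{-1}$ for $t\ge0$. This $F_X$ is the distribution function of the $q$-exponential distribution, whose $q$-density is $\lambda e_q(-\lambda t)$; it is absolutely continuous with finite moments of all orders. *)

theory Defs
  imports "HOL-Probability.Probability"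
begin

definition qexp_neg :: "real \<Rightarrow> real \<Rightarrow> real \<Rightarrow> real" where
  "qexp_neg q lam t = (\<Prod>j. inverse (1 + lam * (1 - q) * q ^ j * t))"

definition qexp_cdf :: "real \<Rightarrow> real \<Rightarrow> real \<Rightarrow> real" where
  "qexp_cdf q lam t = (if t < 0 then 0 else 1 - qexp_neg q lam t)"

end

theory Submission
  imports Defs "HOL-Probability.Sinc_Integral"
begin


locale qe =
  fixes q lam :: real
  assumes q0: "0 < q" and q1: "q < 1" and lam0: "0 < lam"
begin

definition a where "a = lam * (1 - q)"
definition Lf where "Lf t = (\<Sum>j. ln (1 + a * q ^ j * t))"
definition Df where "Df t = (\<Sum>j. a * q ^ j / (1 + a * q ^ j * t))"
definition Sf where "Sf t = exp (- Lf t)"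

lemma a_pos: "0 < a" using q1 lam0 by (simp add: a_def)

lemma term_pos: "t > - 1 / (2*a) \<Longrightarrow> 1 + a * q ^ j * t > 1/2"
proof -
  assume t: "t > - 1 / (2*a)"
  have qj: "0 < q^j" "q^j \<le> 1" using q0 q1 by (auto simp: power_le_one)
  have "a * t > -1/2" using t a_pos by (simp add: field_simps)
  show ?thesis
  proof (cases "t \<ge> 0")
    case True then show ?thesis using qj a_pos by (simp add: add_pos_nonneg)
  next
    case False
    have "(- (a*t)) * (1 - q^j) \<ge> 0" using qj False a_pos
      by (intro mult_nonneg_nonneg) (auto simp: mult_nonneg_nonpos)
    then have "a * q^j * t \<ge> a*t" by (simp add: algebra_simps)
    then show ?thesis using \<open>a*t > -1/2\<close> by simp
  qed
qed

lemma summable_geo: "summable (\<lambda>j. C * q ^ j)"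
  using q0 q1 by (intro summable_mult summable_geometric) auto

lemma summable_ln: assumes "t \<ge> 0" shows "summable (\<lambda>j. ln (1 + a * q ^ j * t))"
proof (rule summable_comparison_test'[where g="\<lambda>j. (a*t) * q^j"])
  show "summable (\<lambda>j. (a*t) * q^j)" by (rule summable_geo)
  fix n
  have "0 \<le> a * q ^ n * t" using assms a_pos q0 by simp
  then show "norm (ln (1 + a * q ^ n * t)) \<le> (a*t) * q^n"
    using ln_add_one_self_le_self[of "a * q ^ n * t"] by (simp add: mult_ac)
qed

lemma qexp_neg_eq: assumes "t \<ge> 0" shows "qexp_neg q lam t = Sf t"
proof -
  have "\<And>j. inverse (1 + lam * (1 - q) * q ^ j * t) = exp (- ln (1 + a * q ^ j * t))"
  proof -
    fix j
    have "0 < 1 + a * q ^ j * t" using assms a_pos q0 by (simp add: add_pos_nonneg)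
    then show "inverse (1 + lam * (1 - q) * q ^ j * t) = exp (- ln (1 + a * q ^ j * t))"
      by (simp add: exp_minus a_def)
  qed
  then have "qexp_neg q lam t = (\<Prod>j. exp (- ln (1 + a * q ^ j * t)))"
    by (simp add: qexp_neg_def)
  also have "\<dots> = exp (\<Sum>j. - ln (1 + a * q ^ j * t))"
    by (rule prodinf_exp) (intro summable_minus summable_ln assms)
  also have "\<dots> = Sf t" unfolding Sf_def Lf_def
    using summable_ln[OF assms] by (simp add: suminf_minus)
  finally show ?thesis .
qed

definition S0 where "S0 = {- 1 / (2*a) <..}"

lemma S0_open: "open S0" and S0_convex: "convex S0" and S0_nonneg: "t \<ge> 0 \<Longrightarrow> t \<in> S0"
  using a_pos by (auto simp: S0_def intro: order.strict_trans2[of _ 0])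

lemma dterm_bound: "t \<in> S0 \<Longrightarrow> norm (a * q ^ j / (1 + a * q ^ j * t)) \<le> 2 * a * q ^ j"
proof -
  assume t: "t \<in> S0"
  have d: "1 + a * q ^ j * t > 1/2" using term_pos t by (simp add: S0_def)
  have n: "0 \<le> a * q ^ j" using a_pos q0 by simp
  have "a * q ^ j / (1 + a * q ^ j * t) \<le> a * q ^ j / (1/2)"
    using d n by (intro divide_left_mono) auto
  then show ?thesis using d n by simp
qed

lemma unif_D: "uniform_limit S0 (\<lambda>n x. \<Sum>i<n. a * q ^ i / (1 + a * q ^ i * x)) Df sequentially"
proof -
  have "uniform_limit S0 (\<lambda>n x. \<Sum>i<n. a * q ^ i / (1 + a * q ^ i * x))
          (\<lambda>x. \<Sum>i. a * q ^ i / (1 + a * q ^ i * x)) sequentially"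
    by (rule Weierstrass_m_test[OF dterm_bound]) (use summable_geo[of "2*a"] in \<open>simp_all add: mult_ac\<close>)
  then show ?thesis by (simp add: Df_def[abs_def])
qed

lemma Df_cont: "continuous_on S0 Df"
proof (rule uniform_limit_theorem[OF _ unif_D])
  show "\<forall>\<^sub>F n in sequentially. continuous_on S0 (\<lambda>x. \<Sum>i<n. a * q ^ i / (1 + a * q ^ i * x))"
  proof (intro always_eventually allI continuous_on_sum ballI continuous_intros)
    fix n x assume "x \<in> S0"
    then show "1 + a * q ^ n * x \<noteq> 0" using term_pos[of x n] by (simp add: S0_def)
  qed
qed simp

lemma Lf_deriv: assumes "t \<in> S0" shows "(Lf has_field_derivative Df t) (at t)"
proof -
  have "((\<lambda>x. \<Sum>n. ln (1 + a * q ^ n * x)) has_field_derivative (\<Sum>n. a * q ^ n / (1 + a * q ^ n * t))) (at t)"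
  proof (rule has_field_derivative_series'(2)[of S0 _ _ 0])
    show "convex S0" by (rule S0_convex)
    show "((\<lambda>x. ln (1 + a * q ^ n * x)) has_field_derivative a * q ^ n / (1 + a * q ^ n * x)) (at x within S0)"
      if "x \<in> S0" for n x
    proof -
      have "1 + a * q ^ n * x > 1/2" using term_pos that by (simp add: S0_def)
      then show ?thesis by (auto intro!: derivative_eq_intros)
    qed
    show "uniformly_convergent_on S0 (\<lambda>n x. \<Sum>i<n. a * q ^ i / (1 + a * q ^ i * x))"
      using unif_D by (auto simp: uniformly_convergent_on_def)
    show "0 \<in> S0" by (rule S0_nonneg) simp
    show "summable (\<lambda>n. ln (1 + a * q ^ n * 0))" by simp
    show "t \<in> interior S0" using assms S0_open by (simp add: interior_open)
  qed
  then show ?thesis by (simp add: Lf_def[abs_def] Df_def)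
qed

lemma Sf_deriv: assumes "t \<in> S0" shows "(Sf has_field_derivative (- Sf t * Df t)) (at t)"
  unfolding Sf_def[abs_def] using Lf_deriv[OF assms]
  by (auto intro!: derivative_eq_intros)

lemma Lf0: "Lf 0 = 0" by (simp add: Lf_def)
lemma Sf0: "Sf 0 = 1" by (simp add: Sf_def Lf0)
lemma Sf_pos: "Sf t > 0" by (simp add: Sf_def)

lemma Lf_ge_partial: assumes "t \<ge> 0" shows "(\<Sum>j<m. ln (1 + a * q ^ j * t)) \<le> Lf t"
  unfolding Lf_def
  by (rule sum_le_suminf[OF summable_ln[OF assms]]) (use assms a_pos q0 in auto)

lemma Lf_nonneg: "t \<ge> 0 \<Longrightarrow> Lf t \<ge> 0"
  using Lf_ge_partial[of t 0] by simp

lemma summable_D: "t \<in> S0 \<Longrightarrow> summable (\<lambda>j. a * q ^ j / (1 + a * q ^ j * t))"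
  by (rule summable_comparison_test'[OF summable_geo[of "2*a"]]) (use dterm_bound in \<open>simp add: mult_ac\<close>)

lemma Df_nonneg: "t \<ge> 0 \<Longrightarrow> Df t \<ge> 0"
  unfolding Df_def
  using a_pos q0
  by (intro suminf_nonneg summable_D S0_nonneg) (auto simp: add_pos_nonneg)


lemma Sf_le1: "t \<ge> 0 \<Longrightarrow> Sf t \<le> 1"
  using Lf_nonneg by (simp add: Sf_def)

lemma Sf_upper: assumes "t \<ge> 0" shows "Sf t \<le> 1 / (\<Prod>j<m. (1 + a * q ^ j * t))"
proof -
  have pos: "\<And>j. 0 < 1 + a * q ^ j * t" using assms a_pos q0 by (simp add: add_pos_nonneg)
  have "(\<Sum>j<m. ln (1 + a * q ^ j * t)) = ln (\<Prod>j<m. (1 + a * q ^ j * t))"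
    using pos by (subst ln_prod) (auto simp: less_imp_neq[symmetric])
  then have "exp (- Lf t) \<le> exp (- ln (\<Prod>j<m. (1 + a * q ^ j * t)))"
    using Lf_ge_partial[OF assms, of m] by simp
  also have "\<dots> = 1 / (\<Prod>j<m. (1 + a * q ^ j * t))"
    using pos by (simp add: exp_minus prod_pos inverse_eq_divide)
  finally show ?thesis by (simp add: Sf_def)
qed

lemma prod_ge: fixes b :: "nat \<Rightarrow> real" assumes "\<And>j. b j \<ge> 0" "t \<ge> 0"
  shows "(\<Prod>j<m. (1 + b j * t)) \<ge> (\<Prod>j<m. b j) * t ^ m"
proof -
  have "(\<Prod>j<m. b j * t) \<le> (\<Prod>j<m. (1 + b j * t))"
    using assms by (intro prod_mono) auto
  moreover have "(\<Prod>j<m. b j * t) = (\<Prod>j<m. b j) * t ^ m"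
    by (simp add: prod.distrib)
  ultimately show ?thesis by simp
qed

lemma Sf_poly: assumes "t > 0" shows "Sf t \<le> 1 / ((\<Prod>j<m. a * q ^ j) * t ^ m)"
proof -
  have "(\<Prod>j<m. a * q ^ j) * t ^ m \<le> (\<Prod>j<m. (1 + a * q ^ j * t))"
    using prod_ge[of "\<lambda>j. a * q ^ j" t m] assms a_pos q0 by simp
  moreover have "0 < (\<Prod>j<m. a * q ^ j) * t ^ m"
    using assms a_pos q0 by (simp add: prod_pos)
  ultimately have "1 / (\<Prod>j<m. (1 + a * q ^ j * t)) \<le> 1 / ((\<Prod>j<m. a * q ^ j) * t ^ m)"
    by (intro divide_left_mono) auto
  with Sf_upper[of t m] assms show ?thesis by simp
qed

lemma Df_le: assumes "t \<ge> 0" shows "Df t \<le> a / (1 - q)"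
proof -
  have "Df t \<le> (\<Sum>j. a * q ^ j)"
    unfolding Df_def
  proof (rule suminf_le)
    fix j
    have "1 \<le> 1 + a * q ^ j * t" using assms a_pos q0 by simp
    moreover have "0 \<le> a * q ^ j" using a_pos q0 by simp
    ultimately show "a * q ^ j / (1 + a * q ^ j * t) \<le> a * q ^ j"
      by (simp add: divide_le_eq mult_le_cancel_left1 order_trans)
  qed (use summable_D[OF S0_nonneg[OF assms]] summable_geo in auto)
  also have "\<dots> = a / (1 - q)"
    using q0 q1 by (simp add: suminf_mult suminf_geometric)
  finally show ?thesis .
qed

lemma Df_ge: assumes "t \<ge> 0" shows "Df t \<ge> a / (1 + a * t)"
proof -
  have "(\<Sum>j<1. a * q ^ j / (1 + a * q ^ j * t)) \<le> Df t"
    unfolding Df_def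
    by (rule sum_le_suminf[OF summable_D[OF S0_nonneg[OF assms]]]) (use assms a_pos q0 in \<open>auto simp: add_pos_nonneg\<close>)
  then show ?thesis by simp
qed

definition L0 where "L0 = - ln q"
lemma L0_pos: "L0 > 0" using q0 q1 by (simp add: L0_def)

lemma Lf_upper: assumes "t \<ge> 0"
  shows "Lf t \<le> ln (1 + a * t) ^ 2 / L0 + ln (1 + a * t) + 1 / (1 - q)"
proof -
  define l where "l = ln (1 + a * t)"
  have l0: "l \<ge> 0" using assms a_pos by (simp add: l_def)
  define K where "K = nat \<lceil>l / L0\<rceil>"
  have K1: "real K \<ge> l / L0" unfolding K_def by linarith
  have K2: "real K \<le> l / L0 + 1"
  proof -
    have "l / L0 \<ge> 0" using l0 L0_pos by simp
    then have "real K = of_int \<lceil>l / L0\<rceil>" unfolding K_def by simp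
    then show ?thesis using of_int_ceiling_le_add_one[of "l/L0"] by linarith
  qed
  have qK: "q ^ K \<le> 1 / (1 + a * t)"
  proof -
    have "q ^ K = exp (real K * ln q)" using q0 by (simp add: exp_of_nat_mult)
    also have "\<dots> = exp (- (real K * L0))" by (simp add: L0_def)
    also have "\<dots> \<le> exp (- l)"
    proof -
      have "real K * L0 \<ge> l" using K1 L0_pos by (simp add: divide_le_eq mult.commute)
      then show ?thesis by simp
    qed
    also have "\<dots> = 1 / (1 + a * t)" using assms a_pos
      by (simp add: l_def exp_minus inverse_eq_divide add_pos_nonneg)
    finally show ?thesis .
  qed
  have sl: "summable (\<lambda>j. ln (1 + a * q ^ j * t))" by (rule summable_ln[OF assms])
  have "Lf t = (\<Sum>j. ln (1 + a * q ^ (j + K) * t)) + (\<Sum>j<K. ln (1 + a * q ^ j * t))"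
    unfolding Lf_def using suminf_split_initial_segment[OF sl, of K] by simp
  also have "(\<Sum>j<K. ln (1 + a * q ^ j * t)) \<le> (\<Sum>j<K. l)"
  proof (rule sum_mono)
    fix j
    have "a * q ^ j * t \<le> a * t"
      using q0 q1 a_pos assms by (simp add: mult_right_le_one_le mult_le_cancel_left1 power_le_one mult.assoc mult_left_le_one_le)
    then show "ln (1 + a * q ^ j * t) \<le> l" unfolding l_def
      using q0 a_pos assms by (subst ln_le_cancel_iff) (auto simp: add_pos_nonneg)
  qed
  also have "(\<Sum>j. ln (1 + a * q ^ (j + K) * t)) \<le> (\<Sum>j. (a * t * q ^ K) * q ^ j)"
  proof (rule suminf_le)
    fix j
    have "0 \<le> a * q ^ (j + K) * t" using q0 a_pos assms by simp
    then have "ln (1 + a * q ^ (j + K) * t) \<le> a * q ^ (j + K) * t" by (rule ln_add_one_self_le_self)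
    then show "ln (1 + a * q ^ (j + K) * t) \<le> (a * t * q ^ K) * q ^ j" by (simp add: power_add mult_ac)
  qed (use summable_ignore_initial_segment[OF sl, of K] summable_geo in auto)
  also have "(\<Sum>j. (a * t * q ^ K) * q ^ j) = a * t * q ^ K / (1 - q)"
    using q0 q1 by (simp add: suminf_mult suminf_geometric)
  also have "a * t * q ^ K \<le> 1"
  proof -
    have "a * t * q ^ K \<le> a * t * (1 / (1 + a * t))" using qK a_pos assms by (intro mult_left_mono) auto
    also have "\<dots> \<le> 1" using a_pos assms by (simp add: add_pos_nonneg)
    finally show ?thesis .
  qed
  then have "a * t * q ^ K / (1 - q) \<le> 1 / (1 - q)" using q1 by (intro divide_right_mono) auto
  finally have "Lf t \<le> 1 / (1 - q) + real K * l" by simp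
  also have "real K * l \<le> (l / L0 + 1) * l" using K2 l0 by (intro mult_right_mono) auto
  finally show ?thesis by (simp add: l_def power2_eq_square algebra_simps)
qed


definition dens where "dens t = (if 0 \<le> t then Sf t * Df t else 0)"

lemma dens_nonneg: "dens t \<ge> 0"
  by (simp add: dens_def Sf_pos less_imp_le Df_nonneg)

lemma Sf_cont: "continuous_on S0 Sf"
  using Sf_deriv by (intro continuous_at_imp_continuous_on ballI DERIV_isCont) auto

lemma dens_meas[measurable]: "dens \<in> borel_measurable borel"
proof -
  have "continuous_on {0..} (\<lambda>t. Sf t * Df t)"
    by (intro continuous_intros continuous_on_subset[OF Sf_cont] continuous_on_subset[OF Df_cont])
       (auto intro: S0_nonneg)
  then have "(\<lambda>x. indicator {0..} x *\<^sub>R (Sf x * Df x)) \<in> borel_measurable borel"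
    by (intro borel_measurable_continuous_on_indicator) auto
  moreover have "(\<lambda>x. indicator {0..} x *\<^sub>R (Sf x * Df x)) = dens"
    by (auto simp: dens_def fun_eq_iff indicator_def)
  ultimately show ?thesis by simp
qed

lemma dens_has_integral: assumes "x \<ge> 0" shows "(dens has_integral (1 - Sf x)) {0..x}"
proof -
  have "((\<lambda>t. Sf t * Df t) has_integral ((- Sf x) - (- Sf 0))) {0..x}"
  proof (rule fundamental_theorem_of_calculus[OF assms])
    fix t assume "t \<in> {0..x}"
    then have "t \<in> S0" by (intro S0_nonneg) auto
    from Sf_deriv[OF this] have "((\<lambda>t. - Sf t) has_field_derivative (Sf t * Df t)) (at t)"
      using DERIV_minus by fastforce
    then show "((\<lambda>t. - Sf t) has_vector_derivative Sf t * Df t) (at t within {0..x})"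
      by (simp add: has_real_derivative_iff_has_vector_derivative has_vector_derivative_at_within)
  qed
  then have "((\<lambda>t. Sf t * Df t) has_integral (1 - Sf x)) {0..x}" by (simp add: Sf0)
  then show ?thesis by (subst has_integral_cong[where g="\<lambda>t. Sf t * Df t"]) (auto simp: dens_def)
qed

lemma emeasure_dens_Iic: "emeasure (density lborel dens) {..x} = ennreal (if x < 0 then 0 else 1 - Sf x)"
proof (cases "x < 0")
  case True
  have "emeasure (density lborel dens) {..x} = (\<integral>\<^sup>+ y. ennreal (dens y) * indicator {..x} y \<partial>lborel)"
    by (simp add: emeasure_density)
  also have "\<dots> = (\<integral>\<^sup>+ y. 0 \<partial>lborel)"
  proof -
    have h: "\<And>y. ennreal (dens y) * indicator {..x} y = 0" using True by (auto simp: dens_def indicator_def)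
    show ?thesis by (simp only: h) simp
  qed
  finally show ?thesis using True by simp
next
  case False
  have "emeasure (density lborel dens) {..x} = (\<integral>\<^sup>+ y. ennreal (dens y) * indicator {..x} y \<partial>lborel)"
    by (simp add: emeasure_density)
  also have "\<dots> = (\<integral>\<^sup>+ y. ennreal (indicator {0..x} y * dens y) \<partial>lborel)"
  proof -
    have "\<And>y. ennreal (dens y) * indicator {..x} y = ennreal (indicator {0..x} y * dens y)"
      by (auto simp: dens_def indicator_def)
    then show ?thesis by simp
  qed
  also have "\<dots> = ennreal (1 - Sf x)"
    by (rule nn_integral_has_integral_lebesgue[OF dens_nonneg dens_has_integral]) (use False in simp)
  finally show ?thesis using False by simp
qed

lemma Sf_lim: "(Sf \<longlongrightarrow> 0) at_top"
proof (rule tendsto_sandwich[where f="\<lambda>_. 0" and h="\<lambda>t. inverse (a * t)"])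
  show "\<forall>\<^sub>F n in at_top. 0 \<le> Sf n" using Sf_pos by (intro always_eventually allI less_imp_le)
  show "\<forall>\<^sub>F n in at_top. Sf n \<le> inverse (a * n)"
    using eventually_gt_at_top[of 0]
  proof eventually_elim
    case (elim t)
    show ?case using Sf_poly[OF elim, of 1] by (simp add: inverse_eq_divide)
  qed
  show "((\<lambda>t. inverse (a * t)) \<longlongrightarrow> 0) at_top"
    by (intro tendsto_inverse_0_at_top filterlim_tendsto_pos_mult_at_top[OF tendsto_const a_pos filterlim_ident])
qed simp

lemma dens_prob: "prob_space (density lborel dens)"
proof
  have "(\<lambda>n. emeasure (density lborel dens) {..real n}) \<longlonglongrightarrow> emeasure (density lborel dens) (\<Union>n. {..real n})"
    by (intro Lim_emeasure_incseq) (auto simp: incseq_def)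
  moreover have "(\<Union>n. {..real n}) = UNIV"
    by (auto intro: real_nat_ceiling_ge)
  moreover have "(\<lambda>n. emeasure (density lborel dens) {..real n}) \<longlonglongrightarrow> ennreal (1 - 0)"
  proof -
    have "(\<lambda>n. Sf (real n)) \<longlonglongrightarrow> 0" by (rule filterlim_compose[OF Sf_lim filterlim_real_sequentially])
    then have "(\<lambda>n. ennreal (1 - Sf (real n))) \<longlonglongrightarrow> ennreal (1 - 0)"
      by (intro tendsto_ennrealI tendsto_intros)
    then show ?thesis by (simp add: emeasure_dens_Iic)
  qed
  ultimately show "emeasure (density lborel dens) (space (density lborel dens)) = 1"
    using LIMSEQ_unique by fastforce
qed

lemma dens_real_distribution: "real_distribution (density lborel dens)"
proof -
  interpret prob_space "density lborel dens" by (rule dens_prob)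
  show ?thesis by standard simp
qed

lemma cdf_dens: "cdf (density lborel dens) x = qexp_cdf q lam x"
proof -
  interpret real_distribution "density lborel dens" by (rule dens_real_distribution)
  have "cdf (density lborel dens) x = enn2real (emeasure (density lborel dens) {..x})"
    by (simp add: cdf_def measure_def)
  also have "\<dots> = (if x < 0 then 0 else 1 - Sf x)"
    using Sf_le1[of x] by (simp add: emeasure_dens_Iic)
  also have "\<dots> = qexp_cdf q lam x"
    by (simp add: qexp_cdf_def qexp_neg_eq)
  finally show ?thesis .
qed


lemma integrable_inv1sq: "integrable lborel (\<lambda>x::real. inverse (1 + x^2))"
  using integrable_inverse_1_plus_square by (simp add: set_integrable_def)

lemma dens_mom_bound: "\<exists>K. \<forall>x. \<bar>dens x * x ^ n\<bar> \<le> K * inverse (1 + x^2)"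
proof -
  define B where "B = a / (1 - q)"
  define C where "C = (\<Prod>j<n+2. a * q ^ j)"
  have B0: "B > 0" using a_pos q1 by (simp add: B_def)
  have C0: "C > 0" using a_pos q0 by (simp add: C_def prod_pos)
  have "\<bar>dens x * x ^ n\<bar> \<le> (2*B + 2*B/C) * inverse (1 + x^2)" for x
  proof (cases "x < 0")
    case True then show ?thesis using B0 C0 by (simp add: dens_def add_pos_nonneg)
  next
    case False
    have ip: "inverse (1 + x^2) > 0" by (simp add: add_pos_nonneg)
    have dx: "dens x * x ^ n \<ge> 0" using False dens_nonneg by simp
    have Db: "Df x \<le> B" using Df_le False by (simp add: B_def)
    have Dn: "Df x \<ge> 0" using Df_nonneg False by simp
    show ?thesis
    proof (cases "x \<le> 1")
      case True
      have "dens x * x ^ n = Sf x * Df x * x ^ n" using False by (simp add: dens_def)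
      also have "\<dots> \<le> 1 * B * 1"
        using False True Sf_le1[of x] Db Dn Sf_pos[of x]
        by (intro mult_mono) (auto simp: power_le_one)
      also have "\<dots> \<le> 2 * B * inverse (1 + x^2)"
      proof -
        have "x^2 \<le> 1" using False True by (simp add: power_le_one)
        then have "inverse (1 + x^2) \<ge> 1/2"
          using le_imp_inverse_le[of "1 + x^2" 2] by (simp add: add_pos_nonneg)
        then show ?thesis using B0 by simp
      qed
      also have "\<dots> \<le> (2*B + 2*B/C) * inverse (1 + x^2)"
        using ip B0 C0 by (intro mult_right_mono) auto
      finally show ?thesis using dx by simp
    next
      case x1: False
      have xp: "x > 0" using x1 by simp
      have "dens x * x ^ n = Sf x * Df x * x ^ n" using False by (simp add: dens_def)
      also have "\<dots> \<le> (1 / (C * x ^ (n+2))) * B * x ^ n"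
      proof -
        have "Sf x \<le> 1 / (C * x ^ (n+2))" using Sf_poly[OF xp, of "n+2"] by (simp only: C_def)
        then show ?thesis using Db Dn Sf_pos[of x] xp C0
          by (intro mult_right_mono mult_mono) auto
      qed
      also have "\<dots> = B / C * (1 / x^2)" using xp by (simp add: field_simps power_add power2_eq_square)
      also have "\<dots> \<le> B / C * (2 * inverse (1 + x^2))"
      proof -
        have "1 \<le> x^2" using x1 by (intro one_le_power) simp
        then have "1 + x^2 \<le> 2 * x^2" by simp
        then have "1 / x^2 \<le> 2 * inverse (1 + x^2)" using xp
          by (simp add: field_simps add_pos_nonneg)
        then show ?thesis using B0 C0 by (intro mult_left_mono) auto
      qed
      also have "\<dots> = (2*B/C) * inverse (1 + x^2)" by simp
      also have "\<dots> \<le> (2*B + 2*B/C) * inverse (1 + x^2)"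
        using ip B0 C0 by (intro mult_right_mono) auto
      finally show ?thesis using dx by simp
    qed
  qed
  then show ?thesis by blast
qed

lemma dens_mom_int: "integrable lborel (\<lambda>x. dens x * x ^ n)"
proof -
  obtain K where K: "\<And>x. \<bar>dens x * x ^ n\<bar> \<le> K * inverse (1 + x^2)" using dens_mom_bound by blast
  show ?thesis
  proof (rule Bochner_Integration.integrable_bound[where f="\<lambda>x. K * inverse (1 + x^2)"])
    show "integrable lborel (\<lambda>x. K * inverse (1 + x^2))" using integrable_inv1sq by simp
    show "AE x in lborel. norm (dens x * x ^ n) \<le> norm (K * inverse (1 + x^2))"
      using K by (intro AE_I2) (auto intro: order_trans abs_ge_self)
  qed simp
qed

end


definition gfun :: "real \<Rightarrow> real \<Rightarrow> real" where
  "gfun c v = exp (- c * v^2) * sin (2 * pi * c * v)"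

definition psi :: "real \<Rightarrow> real \<Rightarrow> real" where
  "psi c t = (if 0 < t then exp (- c * (ln t)^2) * sin (2 * pi * c * ln t) else 0)"

lemma gfun_meas[measurable]: "gfun c \<in> borel_measurable borel"
  unfolding gfun_def by (intro borel_measurable_continuous_onI continuous_intros)

lemma psi_meas[measurable]: "psi c \<in> borel_measurable borel"
proof -
  have "continuous_on {0<..} (\<lambda>t. exp (- c * (ln t)^2) * sin (2 * pi * c * ln t))"
    by (intro continuous_intros) auto
  then have "(\<lambda>x. indicator {0<..} x *\<^sub>R (exp (- c * (ln x)^2) * sin (2 * pi * c * ln x))) \<in> borel_measurable borel"
    by (intro borel_measurable_continuous_on_indicator) auto
  moreover have "(\<lambda>x. indicator {0<..} x *\<^sub>R (exp (- c * (ln x)^2) * sin (2 * pi * c * ln x))) = psi c"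
    by (auto simp: psi_def fun_eq_iff indicator_def)
  ultimately show ?thesis by metis
qed

lemma gfun_int: assumes "c \<ge> 1/2" shows "integrable lborel (gfun c)"
proof (rule Bochner_Integration.integrable_bound[where f="\<lambda>x. sqrt (2*pi) * (std_normal_density x * x ^ 0)"])
  show "integrable lborel (\<lambda>x. sqrt (2*pi) * (std_normal_density x * x ^ 0))"
    using integrable_std_normal_moment[of 0] by simp
  show "AE x in lborel. norm (gfun c x) \<le> norm (sqrt (2*pi) * (std_normal_density x * x ^ 0))"
  proof (intro AE_I2)
    fix x :: real
    have "\<bar>sin (2 * pi * c * x)\<bar> \<le> 1" by (rule abs_sin_le_one)
    then have "\<bar>gfun c x\<bar> \<le> exp (- c * x^2) * 1"
      unfolding gfun_def abs_mult by (simp add: mult_left_le)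
    also have "\<dots> \<le> exp (- (x^2) / 2)"
    proof -
      have "(1/2) * x^2 \<le> c * x^2" using assms by (intro mult_right_mono) auto
      then show ?thesis by simp
    qed
    also have "\<dots> = sqrt (2*pi) * (std_normal_density x * x ^ 0)"
      by (simp add: std_normal_density_def)
    finally show "norm (gfun c x) \<le> norm (sqrt (2*pi) * (std_normal_density x * x ^ 0))"
      by (simp add: std_normal_density_def)
  qed
qed simp

lemma gfun_integral: "integral\<^sup>L lborel (gfun c) = 0"
proof -
  have "integral\<^sup>L lborel (gfun c) = \<bar>-1\<bar> *\<^sub>R integral\<^sup>L lborel (\<lambda>x. gfun c (0 + (-1) * x))"
    by (rule lborel_integral_real_affine) simp
  also have "\<dots> = integral\<^sup>L lborel (\<lambda>x. - gfun c x)"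
    by (simp add: gfun_def)
  also have "\<dots> = - integral\<^sup>L lborel (gfun c)" by simp
  finally show ?thesis by simp
qed

definition hfun :: "real \<Rightarrow> nat \<Rightarrow> real \<Rightarrow> real" where
  "hfun c n u = exp ((n+1) * u - c * u^2) * sin (2 * pi * c * u)"

lemma hfun_shift: assumes "c > 0"
  shows "hfun c n ((n+1)/(2*c) + x) = exp (c * ((n+1)/(2*c))^2) * (-1)^(n+1) * gfun c x"
proof -
  define k where "k = (real n + 1) / (2*c)"
  have e: "(real n+1) * (k + x) - c * (k + x)^2 = c * k^2 + (- c * x^2)"
    using assms by (simp add: k_def power2_eq_square field_simps)
  have s: "2 * pi * c * (k + x) = 2 * pi * c * x + real (n+1) * pi"
    using assms by (simp add: k_def field_simps)
  have sn: "sin (2 * pi * c * (k + x)) = (-1)^(n+1) * sin (2 * pi * c * x)"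
    unfolding s sin_add cos_npi sin_npi by simp
  have e2: "real (n+1) * (k + x) - c * (k + x)^2 = c * k^2 + (- c * x^2)" using e by (simp add: add.commute)
  have "hfun c n (k + x) = exp (c * k^2 + (- c * x^2)) * ((-1)^(n+1) * sin (2 * pi * c * x))"
    unfolding hfun_def e sn ..
  also have "\<dots> = exp (c * k^2) * (-1)^(n+1) * gfun c x"
    unfolding gfun_def exp_add by (simp add: mult_ac)
  finally show ?thesis by (simp add: k_def)
qed

lemma hfun_int: assumes "c \<ge> 1/2"
  shows "integrable lborel (hfun c n) \<and> integral\<^sup>L lborel (hfun c n) = 0"
proof -
  have c0: "c > 0" using assms by simp
  define k where "k = (real n + 1) / (2*c)"
  have eq: "(\<lambda>x. hfun c n (k + 1 * x)) = (\<lambda>x. exp (c * k^2) * (-1)^(n+1) * gfun c x)"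
    using hfun_shift[OF c0, of n] by (simp add: k_def)
  have i1: "integrable lborel (\<lambda>x. hfun c n (k + 1 * x))"
    unfolding eq using gfun_int[OF assms] by simp
  then have "integrable lborel (hfun c n)"
    using lborel_integrable_real_affine_iff[of 1 "hfun c n" k] by simp
  moreover have "integral\<^sup>L lborel (hfun c n) = 0"
  proof -
    have "integral\<^sup>L lborel (hfun c n) = \<bar>1\<bar> *\<^sub>R integral\<^sup>L lborel (\<lambda>x. hfun c n (k + 1 * x))"
      by (rule lborel_integral_real_affine) simp
    also have "\<dots> = 0" unfolding eq by (simp add: gfun_integral)
    finally show ?thesis .
  qed
  ultimately show ?thesis by simp
qed

lemma psi_mom: assumes "c \<ge> 1/2"
  shows "integrable lborel (\<lambda>t. psi c t * t ^ n) \<and> integral\<^sup>L lborel (\<lambda>t. psi c t * t ^ n) = 0"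
proof -
  have hi: "integrable lborel (hfun c n)" and h0: "integral\<^sup>L lborel (hfun c n) = 0"
    using hfun_int[OF assms] by auto
  have habs: "hfun c n absolutely_integrable_on UNIV"
    by (intro absolutely_integrable_onI integrable_on_lborel hi integrable_norm)
  have hI: "integral UNIV (hfun c n) = 0" using integral_lborel[OF hi] h0 by simp
  have eq: "\<bar>exp u\<bar> * (psi c (exp u) * exp u ^ n) = hfun c n u" for u
    by (simp add: psi_def hfun_def exp_add[symmetric] exp_of_nat_mult[symmetric] algebra_simps)
  have "(\<lambda>u. \<bar>exp u\<bar> * (psi c (exp u) * exp u ^ n)) absolutely_integrable_on UNIV \<and>
        integral UNIV (\<lambda>u. \<bar>exp u\<bar> * (psi c (exp u) * exp u ^ n)) = 0"
    unfolding eq using habs hI by simp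
  then have "(\<lambda>t. psi c t * t ^ n) absolutely_integrable_on (exp ` UNIV) \<and>
             integral (exp ` UNIV) (\<lambda>t. psi c t * t ^ n) = 0"
    by (subst (asm) has_absolute_integral_change_of_variables_1'[where g=exp and g'=exp])
       (auto intro!: derivative_eq_intros inj_onI)
  moreover have "exp ` UNIV = {0::real<..}"
    by (auto, metis exp_ln rangeI)
  ultimately have A: "(\<lambda>t. psi c t * t ^ n) absolutely_integrable_on {0<..}"
    and B: "integral {0<..} (\<lambda>t. psi c t * t ^ n) = 0" by auto
  have eq2: "(\<lambda>t. if t \<in> {0<..} then psi c t * t ^ n else 0) = (\<lambda>t. psi c t * t ^ n)"
    by (auto simp: psi_def fun_eq_iff)
  have A2: "(\<lambda>t. psi c t * t ^ n) absolutely_integrable_on UNIV"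
    using A absolutely_integrable_restrict_UNIV[of "{0<..}" "\<lambda>t. psi c t * t ^ n"] eq2 by simp
  have B2: "integral UNIV (\<lambda>t. psi c t * t ^ n) = 0"
    using B integral_restrict_UNIV[of "{0<..}" "\<lambda>t. psi c t * t ^ n"] eq2 by simp
  have "integrable lebesgue (\<lambda>t. psi c t * t ^ n)"
    using A2 by (simp add: set_integrable_def)
  then have I: "integrable lborel (\<lambda>t. psi c t * t ^ n)"
    by (subst (asm) integrable_completion) auto
  moreover have "integral\<^sup>L lborel (\<lambda>t. psi c t * t ^ n) = 0"
    using integral_lborel[OF I] B2 by simp
  ultimately show ?thesis by simp
qed



context qe
begin

definition r where "r = 1 / L0"
definition AA where "AA = ln (1 + a)"
definition bb where "bb = AA * r + 1"
definition BB where "BB = bb^2 + AA^2 * r + 2 * AA"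
definition cc where "cc = r + 1"
definition eps where "eps = a * exp (- (BB + 1 / (1 - q)))"

lemma r_pos: "r > 0" using L0_pos by (simp add: r_def)
lemma AA_nonneg: "AA \<ge> 0" using a_pos by (simp add: AA_def)
lemma cc_ge: "cc \<ge> 1/2" using r_pos by (simp add: cc_def)
lemma eps_pos: "eps > 0" using a_pos by (simp add: eps_def)

lemma ell_bound: assumes "t > 0" shows "ln (1 + a * t) \<le> AA + \<bar>ln t\<bar>"
proof (cases "t \<le> 1")
  case True
  then have "1 + a * t \<le> 1 + a" using a_pos by (simp add: mult_left_le)
  then have "ln (1 + a * t) \<le> AA" unfolding AA_def using assms a_pos by (subst ln_le_cancel_iff) (auto simp: add_pos_pos)
  then show ?thesis by simp
next
  case False
  then have "1 + a * t \<le> t * (1 + a)" by (simp add: algebra_simps)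
  then have "ln (1 + a * t) \<le> ln (t * (1 + a))" using assms a_pos by (subst ln_le_cancel_iff) (auto simp: add_pos_pos)
  also have "\<dots> = ln t + AA" unfolding AA_def using assms a_pos by (simp add: ln_mult)
  finally show ?thesis by simp
qed

lemma poly_ineq:
  fixes l w :: real assumes "0 \<le> l" "l \<le> AA + w" "0 \<le> w"
  shows "l^2 * r + 2 * l \<le> cc * w^2 + BB"
proof -
  have "l^2 * r \<le> (AA + w)^2 * r" using assms r_pos by (intro mult_right_mono power_mono) auto
  moreover have "0 \<le> (w - bb)^2" by simp
  ultimately show ?thesis using assms
    unfolding cc_def BB_def bb_def by (simp add: power2_eq_square algebra_simps)
qed

lemma dens_lower: assumes "t > 0"
  shows "eps * exp (- cc * (ln t)^2) \<le> dens t"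
proof -
  define l where "l = ln (1 + a * t)"
  define w where "w = \<bar>ln t\<bar>"
  have l0: "0 \<le> l" using assms a_pos by (simp add: l_def)
  have lw: "l \<le> AA + w" using ell_bound[OF assms] by (simp add: l_def w_def)
  have w2: "w^2 = (ln t)^2" by (simp add: w_def)
  have P: "l^2 * r + 2 * l \<le> cc * (ln t)^2 + BB"
    using poly_ineq[OF l0 lw] w2 by (simp add: w_def)
  have Lu: "Lf t \<le> l^2 * r + l + 1 / (1 - q)"
    using Lf_upper[of t] assms by (simp add: l_def r_def)
  have "eps * exp (- cc * (ln t)^2) = a * exp (- (BB + 1 / (1 - q)) + - cc * (ln t)^2)"
    unfolding eps_def exp_add by simp
  also have "\<dots> \<le> a * exp (- Lf t - l)"
    using P Lu a_pos by (intro mult_left_mono) auto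
  also have "\<dots> = Sf t * (a / (1 + a * t))"
    using assms a_pos
    by (simp add: Sf_def l_def exp_diff exp_minus inverse_eq_divide add_pos_pos field_simps)
  also have "\<dots> \<le> Sf t * Df t"
    using Df_ge[of t] assms Sf_pos[of t] by (intro mult_left_mono) auto
  also have "\<dots> = dens t" using assms by (simp add: dens_def)
  finally show ?thesis .
qed

lemma psi_le: "\<bar>psi cc t\<bar> \<le> (if 0 < t then exp (- cc * (ln t)^2) else 0)"
proof -
  have "\<bar>sin (2 * pi * cc * ln t)\<bar> \<le> 1" by (rule abs_sin_le_one)
  then show ?thesis by (auto simp: psi_def abs_mult mult_left_le)
qed

lemma dens2_nonneg: "dens t + eps * psi cc t \<ge> 0"
proof (cases "t > 0")
  case True
  have "- (eps * psi cc t) = eps * (- psi cc t)" by simp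
  also have "\<dots> \<le> eps * \<bar>psi cc t\<bar>" using eps_pos by (intro mult_left_mono) auto
  also have "\<dots> \<le> eps * exp (- cc * (ln t)^2)"
    using psi_le[of t] True eps_pos by (intro mult_left_mono) auto
  also have "\<dots> \<le> dens t" by (rule dens_lower[OF True])
  finally show ?thesis by simp
next
  case False then show ?thesis by (simp add: psi_def dens_nonneg)
qed

end


context qe
begin

definition dens2 where "dens2 t = dens t + eps * psi cc t"

lemma dens2_nn: "dens2 t \<ge> 0" using dens2_nonneg by (simp add: dens2_def)

lemma dens2_meas[measurable]: "dens2 \<in> borel_measurable borel"
  unfolding dens2_def by measurable

lemma dens2_mom: "integrable lborel (\<lambda>x. dens2 x * x ^ n) \<and>
   integral\<^sup>L lborel (\<lambda>x. dens2 x * x ^ n) = integral\<^sup>L lborel (\<lambda>x. dens x * x ^ n)"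
proof -
  have p: "integrable lborel (\<lambda>t. psi cc t * t ^ n)" "integral\<^sup>L lborel (\<lambda>t. psi cc t * t ^ n) = 0"
    using psi_mom[OF cc_ge] by auto
  have eq: "(\<lambda>x. dens2 x * x ^ n) = (\<lambda>x. dens x * x ^ n + eps * (psi cc x * x ^ n))"
    by (auto simp: dens2_def algebra_simps fun_eq_iff)
  have i: "integrable lborel (\<lambda>x. dens x * x ^ n + eps * (psi cc x * x ^ n))"
    using dens_mom_int p(1) by auto
  show ?thesis unfolding eq using i dens_mom_int p by simp
qed

lemma dens_total: "integral\<^sup>L lborel dens = 1"
proof -
  have "ennreal (integral\<^sup>L lborel dens) = (\<integral>\<^sup>+ x. dens x \<partial>lborel)"
    using dens_mom_int[of 0] dens_nonneg by (intro nn_integral_eq_integral[symmetric]) auto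
  also have "\<dots> = emeasure (density lborel dens) UNIV"
    by (simp add: emeasure_density)
  also have "\<dots> = 1" using prob_space.emeasure_space_1[OF dens_prob] by simp
  finally show ?thesis using dens_nonneg
    by (metis ennreal_eq_1)
qed

lemma dens2_prob: "real_distribution (density lborel dens2)"
proof -
  have "ennreal (integral\<^sup>L lborel dens2) = (\<integral>\<^sup>+ x. dens2 x \<partial>lborel)"
    using dens2_mom[of 0] dens2_nonneg by (intro nn_integral_eq_integral[symmetric]) (auto simp: dens2_def[abs_def])
  also have "\<dots> = emeasure (density lborel dens2) UNIV"
    by (simp add: emeasure_density)
  finally have "emeasure (density lborel dens2) UNIV = ennreal (integral\<^sup>L lborel dens2)" ..
  moreover have "integral\<^sup>L lborel dens2 = 1" using dens2_mom[of 0] dens_total by simp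
  ultimately have e: "emeasure (density lborel dens2) (space (density lborel dens2)) = 1" by simp
  interpret prob_space "density lborel dens2" by standard (rule e)
  show ?thesis by standard simp
qed

lemma psi_pos: assumes "1 < x" "x < exp (1 / (2 * cc))" shows "psi cc x > 0"
proof -
  have c0: "cc > 0" using cc_ge by simp
  have l0: "0 < ln x" using assms by simp
  have "ln x < ln (exp (1 / (2 * cc)))" using assms by (subst ln_less_cancel_iff) auto
  then have "ln x < 1 / (2 * cc)" by simp
  then have "2 * pi * cc * ln x < pi" using c0 by (simp add: field_simps)
  moreover have "0 < 2 * pi * cc * ln x" using c0 l0 by simp
  ultimately have "sin (2 * pi * cc * ln x) > 0" by (intro sin_gt_zero)
  then show ?thesis using assms by (simp add: psi_def)
qed

lemma dens2_ne: "density lborel dens2 \<noteq> density lborel dens"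
proof
  assume E: "density lborel dens2 = density lborel dens"
  define I where "I = {1 <..< exp (1 / (2 * cc))}"
  have [measurable]: "I \<in> sets borel" by (simp add: I_def)
  have i1: "integral\<^sup>L (density lborel dens2) (indicator I :: real \<Rightarrow> real) = integral\<^sup>L lborel (\<lambda>x. dens2 x * indicator I x)"
    using dens2_nonneg by (subst integral_density) (auto simp: dens2_def)
  have i2: "integral\<^sup>L (density lborel dens) (indicator I :: real \<Rightarrow> real) = integral\<^sup>L lborel (\<lambda>x. dens x * indicator I x)"
    using dens_nonneg by (subst integral_density) auto
  have ip: "integrable lborel (\<lambda>x. indicator I x *\<^sub>R (psi cc x * x ^ 0))"
    using psi_mom[OF cc_ge, of 0] by (intro integrable_mult_indicator) auto
  have id: "integrable lborel (\<lambda>x. indicator I x *\<^sub>R (dens x * x ^ 0))"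
    using dens_mom_int[of 0] by (intro integrable_mult_indicator) auto
  have "integral\<^sup>L lborel (\<lambda>x. dens2 x * indicator I x) =
        integral\<^sup>L lborel (\<lambda>x. dens x * indicator I x) + eps * integral\<^sup>L lborel (\<lambda>x. psi cc x * indicator I x)"
  proof -
    have "(\<lambda>x. dens2 x * indicator I x) = (\<lambda>x. dens x * indicator I x + eps * (psi cc x * indicator I x))"
      by (auto simp: dens2_def fun_eq_iff algebra_simps)
    moreover have "integrable lborel (\<lambda>x. dens x * indicator I x)" using id by (simp add: mult.commute)
    moreover have "integrable lborel (\<lambda>x. psi cc x * indicator I x)" using ip by (simp add: mult.commute)
    ultimately show ?thesis by simp
  qed
  then have Z: "integral\<^sup>L lborel (\<lambda>x. psi cc x * indicator I x) = 0"
    using i1 i2 E eps_pos by simp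
  have pI: "\<And>x. x \<in> I \<Longrightarrow> psi cc x > 0" using psi_pos by (auto simp: I_def)
  have "AE x in lborel. psi cc x * indicator I x = 0"
  proof (subst integral_nonneg_eq_0_iff_AE[symmetric])
    show "integrable lborel (\<lambda>x. psi cc x * indicator I x)" using ip by (simp add: mult.commute)
    show "AE x in lborel. 0 \<le> psi cc x * indicator I x"
      using pI by (intro AE_I2) (auto simp: indicator_def less_imp_le)
  qed (rule Z)
  then obtain Nn where Nn: "{x \<in> space lborel. \<not> psi cc x * indicator I x = 0} \<subseteq> Nn"
    "emeasure lborel Nn = 0" "Nn \<in> sets lborel" by (rule AE_E)
  have "I \<subseteq> Nn" using Nn(1) pI by (force simp: indicator_def)
  then have "emeasure lborel I \<le> emeasure lborel Nn" using Nn(3) by (intro emeasure_mono) auto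
  moreover have "emeasure lborel I = ennreal (exp (1 / (2 * cc)) - 1)"
  proof -
    have "1 \<le> exp (1 / (2 * cc))" using cc_ge by simp
    then show ?thesis by (simp add: I_def)
  qed
  moreover have "exp (1 / (2 * cc)) - 1 > 0" using cc_ge by simp
  ultimately show False using Nn(2) by simp
qed

end

theorem proposition5:
  fixes q lam :: real and M :: "real measure"
  assumes "0 < q" and "q < 1" and "0 < lam"
    and "real_distribution M"
    and "\<And>t. cdf M t = qexp_cdf q lam t"
  shows "\<exists>N :: real measure. real_distribution N \<and> (AE x in N. 0 \<le> x) \<and> N \<noteq> M \<and>
           (\<forall>n::nat. integrable N (\<lambda>x. x ^ n) \<and>
                      (\<integral>x. x ^ n \<partial>N) = (\<integral>x. x ^ n \<partial>M))"
proof -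
  interpret qe q lam using assms(1-3) by unfold_locales
  have MD: "M = density lborel dens"
    using cdf_unique[OF assms(4) dens_real_distribution] assms(5) cdf_dens by (simp add: fun_eq_iff)
  let ?N = "density lborel dens2"
  have "real_distribution ?N" by (rule dens2_prob)
  moreover have "AE x in ?N. 0 \<le> x"
  proof (subst AE_density)
    show "(\<lambda>x. ennreal (dens2 x)) \<in> borel_measurable lborel" by simp
    show "AE x in lborel. 0 < ennreal (dens2 x) \<longrightarrow> 0 \<le> x"
      by (intro AE_I2) (auto simp: dens2_def dens_def psi_def)
  qed
  moreover have "?N \<noteq> M" using dens2_ne MD by simp
  moreover have "integrable ?N (\<lambda>x. x ^ n) \<and> (\<integral>x. x ^ n \<partial>?N) = (\<integral>x. x ^ n \<partial>M)" for n
  proof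
    show "integrable ?N (\<lambda>x. x ^ n)"
      using dens2_mom[of n] dens2_nn by (subst integrable_density) auto
    have "(\<integral>x. x ^ n \<partial>?N) = integral\<^sup>L lborel (\<lambda>x. dens2 x * x ^ n)"
      using dens2_nn by (subst integral_density) auto
    also have "\<dots> = integral\<^sup>L lborel (\<lambda>x. dens x * x ^ n)" using dens2_mom by simp
    also have "\<dots> = (\<integral>x. x ^ n \<partial>M)"
      unfolding MD using dens_nonneg by (subst integral_density) auto
    finally show "(\<integral>x. x ^ n \<partial>?N) = (\<integral>x. x ^ n \<partial>M)" .
  qed
  ultimately show ?thesis by blast
qed

end
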